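(* Let $H$ be a hypergraph containing some $2$-edges and let $H'$ be its $2$-subdivision. If $H$ is degenerate, then so is $H'$.
   Context: A hypergraph $H=(V,E)$ has finite vertex set $V$ and edge set $E\subseteq 2^V$; $R(H)=\{|F|:F\in E\}$. $H_1\subseteq H_2$ means there is an injective $f\colon V(H_1)\to V(H_2)$ with $f(F)\in E(H_2)$ for all $F\in E(H_1)$. For $G$ on $n$ vertices, $h_n(G)=\sum_{F\in E(G)}1/\binom{n}{|F|}$; $\pi_n(H)=\max\{h_n(G): G\text{ on } n \text{ vertices}, R(G)\subseteq R(H), H\not\subseteq G\}$ and $\pi(H)=\lim_n\pi_n(H)$. $H$ is degenerate if $\pi(H)=|R(H)|-1$. The $2$-subdivision of $H$: if $H$ has $2$-edges $\{u_1,v_1\},\dots,\{u_t,v_t\}$, add $t$ new vertices $x_1,\dots,x_t$ and replace each $\{u_i,v_i\}$ by the two edges $\{u_i,x_i\},\{x_i,v_i\}$, keeping all other edges. *)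

theory Defs
  imports Complex_Main
begin

type_synonym 'a hgraph = "'a set \<times> 'a set set"

definition hypergraph :: "'a hgraph \<Rightarrow> bool" where
  "hypergraph H \<longleftrightarrow> finite (fst H) \<and> (\<forall>F\<in>snd H. F \<subseteq> fst H)"

definition edge_sizes :: "'a hgraph \<Rightarrow> nat set" where
  "edge_sizes H = card ` snd H"

definition subhyp :: "'a hgraph \<Rightarrow> 'b hgraph \<Rightarrow> bool" where
  "subhyp H1 H2 \<longleftrightarrow> (\<exists>f. inj_on f (fst H1) \<and> f ` fst H1 \<subseteq> fst H2 \<and>
                        (\<forall>F\<in>snd H1. f ` F \<in> snd H2))"

definition h_n :: "nat \<Rightarrow> 'b set set \<Rightarrow> real" where
  "h_n n E = (\<Sum>F\<in>E. 1 / real (n choose card F))"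

text \<open>pi_n(H): maximum of h_n(G) over hypergraphs G on n vertices (w.l.o.g. on {0..<n})
  with R(G) \<subseteq> R(H) and H not contained in G.\<close>
definition pi_n :: "'a hgraph \<Rightarrow> nat \<Rightarrow> real" where
  "pi_n H n = Max {h_n n E | E. E \<subseteq> Pow {0..<n} \<and> edge_sizes ({0..<n}, E) \<subseteq> edge_sizes H
                                \<and> \<not> subhyp H ({0..<n}, E)}"

definition degenerate :: "'a hgraph \<Rightarrow> bool" where
  "degenerate H \<longleftrightarrow> ((\<lambda>n. pi_n H n) \<longlonglongrightarrow> real (card (edge_sizes H)) - 1)"

text \<open>2-subdivision: old vertices are Inl v; the new vertex subdividing the 2-edge F is Inr F.\<close>
definition subdiv2 :: "'a hgraph \<Rightarrow> ('a + 'a set) hgraph" where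
  "subdiv2 H = (Inl ` fst H \<union> Inr ` {F \<in> snd H. card F = 2},
                {Inl ` F | F. F \<in> snd H \<and> card F \<noteq> 2} \<union>
                {{Inl u, Inr F} | u F. F \<in> snd H \<and> card F = 2 \<and> u \<in> F})"

end

theory Submission
  imports Defs
begin


lemma card_ordered_pairs:
  assumes fin: "finite V" and sym: "\<And>u v. P u v \<Longrightarrow> P v u" and irr: "\<And>u. \<not> P u u"
  shows "card {(u,v). u\<in>V \<and> v\<in>V \<and> P u v} = 2 * card {{u,v}|u v. u\<in>V \<and> v\<in>V \<and> P u v}"
proof -
  let ?K = "{{u,v}|u v. u\<in>V \<and> v\<in>V \<and> P u v}"
  let ?O = "{(u,v). u\<in>V \<and> v\<in>V \<and> P u v}"
  let ?piece = "\<lambda>F. {(u,v). u\<in>V \<and> v\<in>V \<and> P u v \<and> {u,v} = F}"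
  have O: "?O = (\<Union>F\<in>?K. ?piece F)" by blast
  have finK: "finite ?K"
    by (rule finite_subset[of _ "Pow V"]) (use fin in auto)
  have pc: "card (?piece F) = 2" if "F \<in> ?K" for F
  proof -
    from that obtain a b where ab: "a\<in>V" "b\<in>V" "P a b" "F = {a,b}" by blast
    have ne: "a \<noteq> b" using ab irr by blast
    have "?piece F = {(a,b),(b,a)}"
    proof (intro equalityI subsetI)
      fix x assume "x \<in> ?piece F"
      then obtain u v where x: "x = (u,v)" "P u v" "{u,v} = {a,b}" using ab(4) by (cases x) auto
      have "u \<noteq> v" using x(2) irr by metis
      with x(3) have "(u = a \<and> v = b) \<or> (u = b \<and> v = a)" unfolding doubleton_eq_iff by blast
      then show "x \<in> {(a,b),(b,a)}" using x(1) by blast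
    next
      fix x assume "x \<in> {(a,b),(b,a)}"
      then show "x \<in> ?piece F" using ab sym[of a b] by (auto simp: insert_commute)
    qed
    then show ?thesis using ne by simp
  qed
  have "card ?O = (\<Sum>F\<in>?K. card (?piece F))"
    unfolding O
    by (rule card_UN_disjoint) (use fin finK in \<open>auto intro: finite_subset[of _ "V \<times> V"]\<close>)
  also have "\<dots> = (\<Sum>F\<in>?K. 2)" using pc by (rule sum.cong[OF refl])
  finally show ?thesis by simp
qed



lemma frac_sym_ge2:
  fixes x y :: real assumes "x > 0" "y > 0" shows "x / y + y / x \<ge> 2"
proof -
  have "x / y + y / x - 2 = (x - y)^2 / (x * y)" using assms
    by (simp add: field_simps power2_eq_square)
  moreover have "(x - y)^2 / (x * y) \<ge> 0" using assms by simp
  ultimately show ?thesis by linarith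
qed

lemma aux_half: fixes b bh n X nt :: real
  shows "2 * b \<le> 2 * bh + n + X + 2 * nt \<Longrightarrow> b \<le> bh + nt + n / 2 + X / 2"
  by linarith

lemma codeg_count:
  fixes V :: "'b set" and B :: "'b set set" and c :: nat and t :: real
  assumes fin: "finite V" and BV: "B \<subseteq> Pow V" and B2: "\<forall>F\<in>B. card F = 2" and tpos: "t > 0"
  defines "N \<equiv> \<lambda>u. {w\<in>V. {u,w} \<in> B}"
  defines "Bh \<equiv> {{u,v}|u v. u\<in>V \<and> v\<in>V \<and> u\<noteq>v \<and> c \<le> card (N u \<inter> N v)}"
  shows "real (card B) \<le> real (card Bh) + real (card V) * t + real (card V) / 2
           + real (card V)^2 * real c / (2*t)"
proof -
  define n where "n = card V"
  define d where "d = (\<lambda>u. card (N u))"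
  define cd where "cd = (\<lambda>u v. card (N u \<inter> N v))"
  define hi where "hi = (\<lambda>u. card {v\<in>V. c \<le> cd u v})"
  have finN: "finite (N u)" for u unfolding N_def using fin by simp
  have NV: "N u \<subseteq> V" for u unfolding N_def by auto
  have irr: "{u,u} \<notin> B" for u using B2 by force
  have symB: "{u,w} \<in> B \<longleftrightarrow> {w,u} \<in> B" for u w by (simp add: insert_commute)
  have memN: "w \<in> N u \<longleftrightarrow> w \<in> V \<and> {u,w} \<in> B" for u w unfolding N_def by simp
  have Nsym: "u \<in> V \<Longrightarrow> w \<in> N u \<longleftrightarrow> u \<in> N w" for u w unfolding N_def using symB BV by auto
  have Beq: "B = {{u,w}|u w. u\<in>V \<and> w\<in>V \<and> {u,w} \<in> B}"
  proof (intro equalityI subsetI)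
    fix F assume F: "F \<in> B"
    then obtain a b where "F = {a,b}" "a \<noteq> b" using B2 by (meson card_2_iff)
    then show "F \<in> {{u,w}|u w. u\<in>V \<and> w\<in>V \<and> {u,w} \<in> B}" using F BV by blast
  qed auto
  define Ord where "Ord = {(u,w). u\<in>V \<and> w\<in>V \<and> {u,w} \<in> B}"
  have cardOrd: "card Ord = 2 * card B"
    unfolding Ord_def
    by (subst Beq, rule card_ordered_pairs[OF fin]) (use irr symB in auto)
  have Ord_Sigma: "Ord = Sigma V N" unfolding Ord_def N_def by auto
  have cardO2: "card Ord = (\<Sum>u\<in>V. d u)" unfolding Ord_Sigma d_def using fin finN by simp
  define Qs where "Qs = {(u,v). u\<in>V \<and> v\<in>V \<and> (u \<noteq> v \<and> c \<le> card (N u \<inter> N v))}"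
  have cardQs: "card Qs = 2 * card Bh"
    unfolding Qs_def Bh_def
    by (rule card_ordered_pairs[OF fin]) (auto simp: Int_commute)
  have sumhi: "(\<Sum>u\<in>V. hi u) \<le> card Qs + n"
  proof -
    have "(\<Sum>u\<in>V. hi u) = card (Sigma V (\<lambda>u. {v\<in>V. c \<le> cd u v}))"
      unfolding hi_def using fin by simp
    also have "\<dots> \<le> card (Qs \<union> (\<lambda>u. (u,u)) ` V)"
    proof (rule card_mono)
      have "Qs \<subseteq> V \<times> V" unfolding Qs_def by auto
      then show "finite (Qs \<union> (\<lambda>u. (u,u)) ` V)" using fin finite_subset by blast
    qed (auto simp: Qs_def cd_def)
    also have "\<dots> \<le> card Qs + card ((\<lambda>u. (u,u)) ` V)" by (rule card_Un_le)
    also have "\<dots> \<le> card Qs + n" unfolding n_def using card_image_le[OF fin] by auto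
    finally show ?thesis .
  qed
  have dc: "(\<Sum>w\<in>N u. d w) = (\<Sum>v\<in>V. cd u v)" if "u \<in> V" for u
  proof -
    have "(\<Sum>w\<in>N u. d w) = (\<Sum>w\<in>N u. \<Sum>v\<in>V. of_bool (v \<in> N w) :: nat)"
      unfolding d_def using fin NV by (auto intro!: sum.cong simp: Int_absorb1)
    also have "\<dots> = (\<Sum>v\<in>V. \<Sum>w\<in>N u. of_bool (v \<in> N w) :: nat)" by (rule sum.swap)
    also have "\<dots> = (\<Sum>v\<in>V. cd u v)"
    proof (rule sum.cong[OF refl])
      fix v assume v: "v \<in> V"
      have "(\<Sum>w\<in>N u. of_bool (v \<in> N w) :: nat) = card (N u \<inter> {w. v \<in> N w})"
        using finN by simp
      also have "N u \<inter> {w. v \<in> N w} = N u \<inter> N v" using Nsym[OF v] NV by auto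
      finally show "(\<Sum>w\<in>N u. of_bool (v \<in> N w) :: nat) = cd u v" unfolding cd_def .
    qed
    finally show ?thesis .
  qed
  have split: "(\<Sum>v\<in>V. cd u v) \<le> hi u * d u + n * c" for u
  proof -
    have "(\<Sum>v\<in>V. cd u v) \<le> (\<Sum>v\<in>V. (if c \<le> cd u v then d u else 0) + c)"
    proof (rule sum_mono)
      fix v assume "v \<in> V"
      have "cd u v \<le> d u" unfolding cd_def d_def by (rule card_mono[OF finN]) auto
      then show "cd u v \<le> (if c \<le> cd u v then d u else 0) + c" by auto
    qed
    also have "\<dots> = (\<Sum>v\<in>V. (if c \<le> cd u v then d u else 0)) + n * c"
      by (simp add: sum.distrib n_def)
    also have "(\<Sum>v\<in>V. (if c \<le> cd u v then d u else 0)) = hi u * d u"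
      unfolding hi_def using fin by (simp add: sum.inter_filter[symmetric])
    finally show ?thesis .
  qed
  define L where "L = {u\<in>V. t \<le> real (d u)}"
  have finL: "finite L" unfolding L_def using fin by simp
  have dpos: "u \<in> L \<Longrightarrow> real (d u) > 0" for u unfolding L_def using tpos by auto
  define S where "S = Sigma L (\<lambda>u. N u \<inter> L)"
  have finS: "finite S" unfolding S_def using finL finN by auto
  have ineq8: "(\<Sum>w\<in>N u. real (d w)) / real (d u) \<le> real (hi u) + real n * real c / t"
    if "u \<in> L" for u
  proof -
    have uV: "u \<in> V" using that unfolding L_def by auto
    have "(\<Sum>w\<in>N u. real (d w)) \<le> real (hi u) * real (d u) + real n * real c"
      using dc[OF uV] split[of u] by (metis of_nat_add of_nat_le_iff of_nat_mult of_nat_sum)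
    hence "(\<Sum>w\<in>N u. real (d w)) / real (d u) \<le> real (hi u) + real n * real c / real (d u)"
      using dpos[OF that] by (simp add: divide_simps algebra_simps)
    also have "real n * real c / real (d u) \<le> real n * real c / t"
      using that tpos unfolding L_def by (auto intro!: divide_left_mono)
    finally show ?thesis by simp
  qed
  have sumS: "(\<Sum>(u,w)\<in>S. real (d w) / real (d u)) \<le> real (card Qs) + real n + real n * (real n * real c / t)"
  proof -
    have "(\<Sum>(u,w)\<in>S. real (d w) / real (d u)) = (\<Sum>u\<in>L. \<Sum>w\<in>N u \<inter> L. real (d w) / real (d u))"
      unfolding S_def using finL finN by (subst sum.Sigma) auto
    also have "\<dots> \<le> (\<Sum>u\<in>L. \<Sum>w\<in>N u. real (d w) / real (d u))"
      by (rule sum_mono, rule sum_mono2) (use finN in auto)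
    also have "\<dots> = (\<Sum>u\<in>L. (\<Sum>w\<in>N u. real (d w)) / real (d u))"
      by (simp add: sum_divide_distrib)
    also have "\<dots> \<le> (\<Sum>u\<in>L. real (hi u) + real n * real c / t)"
      by (rule sum_mono) (rule ineq8)
    also have "\<dots> = (\<Sum>u\<in>L. real (hi u)) + real (card L) * (real n * real c / t)"
      by (simp add: sum.distrib)
    also have "\<dots> \<le> (\<Sum>u\<in>V. real (hi u)) + real n * (real n * real c / t)"
    proof (rule add_mono)
      show "(\<Sum>u\<in>L. real (hi u)) \<le> (\<Sum>u\<in>V. real (hi u))"
        by (rule sum_mono2) (use fin in \<open>auto simp: L_def\<close>)
      have "card L \<le> n" unfolding n_def L_def using fin by (intro card_mono) auto
      then show "real (card L) * (real n * real c / t) \<le> real n * (real n * real c / t)"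
        using tpos by (intro mult_right_mono) auto
    qed
    also have "(\<Sum>u\<in>V. real (hi u)) \<le> real (card Qs) + real n"
      using sumhi by (metis of_nat_add of_nat_le_iff of_nat_sum)
    finally show ?thesis by simp
  qed
  have Ssym: "(w,u) \<in> S \<longleftrightarrow> (u,w) \<in> S" for u w
    unfolding S_def L_def using Nsym by auto
  have swapS: "bij_betw prod.swap S S"
    unfolding bij_betw_def inj_on_def
  proof (intro conjI ballI impI equalityI subsetI)
    fix p q assume "p \<in> S" "q \<in> S" "prod.swap p = prod.swap q" then show "p = q" by (cases p; cases q) auto
  next
    fix x assume "x \<in> prod.swap ` S" then show "x \<in> S" using Ssym by auto
  next
    fix x assume x: "x \<in> S"
    obtain u w where "x = (u,w)" by (cases x)
    then show "x \<in> prod.swap ` S" using x Ssym by (metis image_eqI swap_simp)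
  qed
  have sw: "(\<Sum>(u,w)\<in>S. real (d w) / real (d u)) = (\<Sum>(u,w)\<in>S. real (d u) / real (d w))"
    using sum.reindex_bij_betw[OF swapS, of "\<lambda>(u,w). real (d w) / real (d u)"]
    by (simp add: case_prod_beta)
  have cardS: "real (card S) \<le> (\<Sum>(u,w)\<in>S. real (d w) / real (d u))"
  proof -
    have "2 * real (card S) = (\<Sum>p\<in>S. 2::real)" by simp
    also have "\<dots> \<le> (\<Sum>(u,w)\<in>S. real (d w) / real (d u) + real (d u) / real (d w))"
    proof (rule sum_mono)
      fix p assume p: "p \<in> S"
      obtain u w where uw: "p = (u,w)" by (cases p)
      have "u \<in> L" "w \<in> L" using p uw unfolding S_def by auto
      then show "2 \<le> (case p of (u,w) \<Rightarrow> real (d w) / real (d u) + real (d u) / real (d w))"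
        using uw frac_sym_ge2 dpos by simp
    qed
    also have "\<dots> = 2 * (\<Sum>(u,w)\<in>S. real (d w) / real (d u))"
      using sw by (simp add: sum.distrib case_prod_beta)
    finally show ?thesis by simp
  qed
  define Ord1 where "Ord1 = Sigma (V - L) N"
  have cardO1: "real (card Ord1) \<le> real n * t"
  proof -
    have "card Ord1 = (\<Sum>u\<in>V-L. d u)" unfolding Ord1_def d_def using fin finN by simp
    hence "real (card Ord1) = (\<Sum>u\<in>V-L. real (d u))" by simp
    also have "\<dots> \<le> (\<Sum>u\<in>V-L. t)" by (rule sum_mono) (auto simp: L_def)
    also have "\<dots> = real (card (V - L)) * t" by simp
    also have "\<dots> \<le> real n * t" unfolding n_def using tpos fin
      by (intro mult_right_mono) (auto intro: card_mono)
    finally show ?thesis .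
  qed
  have Osub: "Ord \<subseteq> S \<union> Ord1 \<union> prod.swap ` Ord1"
  proof
    fix p assume "p \<in> Ord"
    then obtain u w where p: "p = (u,w)" "u \<in> V" "w \<in> V" "{u,w} \<in> B" unfolding Ord_def by blast
    show "p \<in> S \<union> Ord1 \<union> prod.swap ` Ord1"
    proof (cases "u \<in> L")
      case uL: True
      show ?thesis
      proof (cases "w \<in> L")
        case True then show ?thesis using uL p unfolding S_def N_def by auto
      next
        case False
        have "(w,u) \<in> Ord1" using False p symB unfolding Ord1_def N_def by auto
        then have "prod.swap (w,u) \<in> prod.swap ` Ord1" by blast
        then show ?thesis using p by simp
      qed
    next
      case False then show ?thesis using p unfolding Ord1_def N_def by auto
    qed
  qed
  have finO1: "finite Ord1" unfolding Ord1_def using fin finN by auto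
  have "card Ord \<le> card (S \<union> Ord1 \<union> prod.swap ` Ord1)"
    by (rule card_mono[OF _ Osub]) (use finS finO1 in auto)
  also have "\<dots> \<le> card S + card Ord1 + card (prod.swap ` Ord1)"
    by (meson add_mono_thms_linordered_semiring(3) card_Un_le order_trans)
  also have "card (prod.swap ` Ord1) \<le> card Ord1" by (rule card_image_le[OF finO1])
  finally have "card Ord \<le> card S + 2 * card Ord1" by simp
  hence "real (card Ord) \<le> real (card S) + 2 * real (card Ord1)" by linarith
  hence "2 * real (card B) \<le> real (card S) + 2 * (real n * t)"
    using cardOrd cardO1 by simp
  moreover have "real (card Qs) = 2 * real (card Bh)" using cardQs by simp
  ultimately have "2 * real (card B) \<le> 2 * real (card Bh) + real n + real n * (real n * real c / t) + 2 * (real n * t)"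
    using cardS sumS by linarith
  hence "real (card B) \<le> real (card Bh) + real n * t + real n / 2 + real n * (real n * real c / t) / 2"
    by (rule aux_half)
  moreover have "real n * (real n * real c / t) / 2 = real n ^ 2 * real c / (2 * t)"
    by (simp add: power2_eq_square)
  ultimately show ?thesis unfolding n_def by simp
qed



lemma greedy_inj:
  assumes "finite T" "finite X" "\<forall>x\<in>T. finite (C x)"
    "\<forall>x\<in>T. card T + card X \<le> card (C x)"
  shows "\<exists>m. inj_on m T \<and> (\<forall>x\<in>T. m x \<in> C x \<and> m x \<notin> X)"
  using assms(1,3,4)
proof (induction T rule: finite_induct)
  case empty then show ?case by auto
next
  case (insert a T)
  have "\<forall>x\<in>T. card T + card X \<le> card (C x)" using insert.prems insert.hyps by auto
  with insert.IH insert.prems obtain m where m: "inj_on m T" "\<forall>x\<in>T. m x \<in> C x \<and> m x \<notin> X" by auto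
  have fa: "finite (C a)" using insert.prems by auto
  have ca: "card T + 1 + card X \<le> card (C a)" using insert.prems insert.hyps by auto
  have "card (X \<union> m ` T) \<le> card X + card T"
    using card_Un_le[of X "m ` T"] card_image_le[OF insert.hyps(1), of m] by linarith
  hence "card (X \<union> m ` T) < card (C a)" using ca by linarith
  then have "\<not> C a \<subseteq> X \<union> m ` T"
    using card_mono[of "X \<union> m ` T" "C a"] assms(2) insert.hyps(1) by auto
  then obtain y where y: "y \<in> C a" "y \<notin> X" "y \<notin> m ` T" by blast
  let ?m = "m(a := y)"
  have "inj_on ?m (insert a T)"
    using m(1) y(3) insert.hyps(2) by (auto simp: inj_on_def)
  moreover have "\<forall>x\<in>insert a T. ?m x \<in> C x \<and> ?m x \<notin> X" using m y insert.hyps(2) by auto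
  ultimately show ?case by blast
qed



lemma lift_embedding:
  fixes H :: "'a hgraph" and V :: "'b set" and E :: "'b set set"
  assumes hyp: "hypergraph H" and fin: "finite V" and EV: "E \<subseteq> Pow V"
  defines "B \<equiv> {F\<in>E. card F = 2}"
  defines "N \<equiv> \<lambda>u. {w\<in>V. {u,w} \<in> B}"
  defines "c \<equiv> card (fst H) + card {F\<in>snd H. card F = 2}"
  defines "Bh \<equiv> {{u,v}|u v. u\<in>V \<and> v\<in>V \<and> u\<noteq>v \<and> c \<le> card (N u \<inter> N v)}"
  assumes sub: "subhyp H (V, {F\<in>E. card F \<noteq> 2} \<union> Bh)"
  shows "subhyp (subdiv2 H) (V, E)"
proof -
  obtain f where f: "inj_on f (fst H)" "f ` fst H \<subseteq> V"
      "\<forall>F\<in>snd H. f ` F \<in> {F\<in>E. card F \<noteq> 2} \<union> Bh"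
    using sub unfolding subhyp_def by auto
  define T where "T = {F\<in>snd H. card F = 2}"
  have finH: "finite (fst H)" and EH: "\<forall>F\<in>snd H. F \<subseteq> fst H" using hyp unfolding hypergraph_def by auto
  have finT: "finite T" unfolding T_def
    by (rule finite_subset[of _ "Pow (fst H)"]) (use finH EH in auto)
  define C where "C = (\<lambda>F. {w\<in>V. \<forall>u\<in>F. {f u, w} \<in> B})"
  have Bh2: "card F = 2" if "F \<in> Bh" for F using that unfolding Bh_def by auto
  have cC: "c \<le> card (C F)" if F: "F \<in> T" for F
  proof -
    have FH: "F \<subseteq> fst H" "F \<in> snd H" "card F = 2" using F EH unfolding T_def by auto
    have "card (f ` F) = 2" using FH inj_on_subset[OF f(1) FH(1)] card_image by metis
    hence "f ` F \<in> Bh" using f(3) FH(2) by auto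
    then obtain u v where uv: "f ` F = {u,v}" "c \<le> card (N u \<inter> N v)" unfolding Bh_def by blast
    have "C F = {w\<in>V. \<forall>y\<in>f ` F. {y,w} \<in> B}" unfolding C_def by auto
    also have "\<dots> = N u \<inter> N v" unfolding uv(1) N_def by auto
    finally show ?thesis using uv(2) by simp
  qed
  have "\<exists>m. inj_on m T \<and> (\<forall>x\<in>T. m x \<in> C x \<and> m x \<notin> f ` fst H)"
  proof (rule greedy_inj[OF finT])
    show "finite (f ` fst H)" using finH by simp
    show "\<forall>x\<in>T. finite (C x)" unfolding C_def using fin by simp
    have "card (f ` fst H) \<le> card (fst H)" by (rule card_image_le[OF finH])
    then show "\<forall>x\<in>T. card T + card (f ` fst H) \<le> card (C x)"
      using cC unfolding c_def T_def by fastforce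
  qed
  then obtain m where m: "inj_on m T" "\<forall>x\<in>T. m x \<in> C x \<and> m x \<notin> f ` fst H" by blast
  define g where "g = case_sum f m"
  have "inj_on g (Inl ` fst H \<union> Inr ` T)"
  proof (rule inj_onI)
    fix x y assume x: "x \<in> Inl ` fst H \<union> Inr ` T" and y: "y \<in> Inl ` fst H \<union> Inr ` T" and e: "g x = g y"
    from x show "x = y"
    proof (elim UnE imageE)
      fix a assume a: "a \<in> fst H" "x = Inl a"
      from y show "x = y"
      proof (elim UnE imageE)
        fix b assume b: "b \<in> fst H" "y = Inl b"
        then show "x = y" using a e f(1) unfolding g_def inj_on_def by simp
      next
        fix G assume G: "G \<in> T" "y = Inr G"
        have "m G \<notin> f ` fst H" using m G by blast
        then show "x = y" using a G e unfolding g_def by (auto simp: image_iff)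
      qed
    next
      fix F1 assume a: "F1 \<in> T" "x = Inr F1"
      from y show "x = y"
      proof (elim UnE imageE)
        fix b assume b: "b \<in> fst H" "y = Inl b"
        have "m F1 \<notin> f ` fst H" using m a by blast
        then show "x = y" using a b e unfolding g_def by (auto simp: image_iff)
      next
        fix G assume G: "G \<in> T" "y = Inr G"
        then show "x = y" using a e m(1) unfolding g_def inj_on_def by simp
      qed
    qed
  qed
  moreover have "g ` (Inl ` fst H \<union> Inr ` T) \<subseteq> V"
    using f(2) m unfolding g_def C_def by auto
  moreover have "\<forall>F\<in>snd (subdiv2 H). g ` F \<in> E"
  proof
    fix F assume "F \<in> snd (subdiv2 H)"
    then consider (a) F0 where "F = Inl ` F0" "F0 \<in> snd H" "card F0 \<noteq> 2"
      | (b) u F0 where "F = {Inl u, Inr F0}" "F0 \<in> snd H" "card F0 = 2" "u \<in> F0"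
      unfolding subdiv2_def by auto
    then show "g ` F \<in> E"
    proof cases
      case a
      have "g ` F = f ` F0" unfolding a(1) g_def by force
      moreover have "card (f ` F0) = card F0"
        using a(2) EH inj_on_subset[OF f(1)] card_image by metis
      ultimately show ?thesis using f(3) a Bh2 by fastforce
    next
      case b
      have "F0 \<in> T" using b unfolding T_def by auto
      hence "{f u, m F0} \<in> B" using m b(4) unfolding C_def by auto
      moreover have "g ` F = {f u, m F0}" unfolding b(1) g_def by simp
      ultimately show ?thesis unfolding B_def by auto
    qed
  qed
  ultimately show ?thesis unfolding subhyp_def subdiv2_def T_def by auto
qed


lemma ch2: "real (n choose 2) = real n * (real n - 1) / 2"
  by (cases n) (simp_all add: binomial_gbinomial gbinomial_prod_rev numeral_2_eq_2 field_simps)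
lemma lim0: "(\<lambda>n::nat. K / sqrt (real n)) \<longlonglongrightarrow> 0"
  by (rule tendsto_divide_0[OF tendsto_const])
     (rule filterlim_at_top_imp_at_infinity, rule filterlim_compose[OF sqrt_at_top filterlim_real_sequentially])
lemma errb:
  fixes n :: nat and c :: real assumes "n \<ge> 2" "c \<ge> 0"
  shows "(real n * sqrt (real n) + real n / 2 + real n ^ 2 * c / (2 * sqrt (real n))) / real (n choose 2)
         \<le> (6 + 2 * c) / sqrt (real n)"
proof -
  define s where "s = sqrt (real n)"
  have s1: "s \<ge> 1" unfolding s_def using assms by simp
  have ns: "real n = s^2" unfolding s_def by simp
  have C: "real (n choose 2) = s^2 * (s^2 - 1) / 2" unfolding ch2 ns ..
  have s2: "s^2 \<ge> 2" using assms ns by simp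
  have num: "real n * s + real n / 2 + real n ^ 2 * c / (2 * s) = s^3 + s^2/2 + s^3 * c / 2"
    unfolding ns using s1 by (simp add: power2_eq_square power3_eq_cube field_simps)
  have h1: "s^3 + s^2/2 + s^3 * c / 2 \<le> s^3 * (3 + c) / 2"
  proof -
    have "s^2 \<le> s^3" using s1 by (simp add: power_increasing)
    then show ?thesis by (simp add: algebra_simps)
  qed
  have h2: "s^2 * (s^2 - 1) / 2 \<ge> s^4 / 4"
  proof -
    have "2 * s^2 \<le> s^2 * s^2" using mult_right_mono[OF s2, of "s^2"] by simp
    then show ?thesis by (simp add: power2_eq_square power4_eq_xxxx algebra_simps)
  qed
  have "(s^3 + s^2/2 + s^3 * c / 2) / (s^2 * (s^2 - 1) / 2) \<le> (s^3 * (3 + c) / 2) / (s^4/4)"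
    by (rule frac_le[OF _ h1 _ h2]) (use s1 assms(2) in auto)
  also have "\<dots> = (6 + 2 * c) / s" using s1 by (simp add: field_simps power2_eq_square power3_eq_cube power4_eq_xxxx)
  finally show ?thesis unfolding s_def[symmetric] C num .
qed


lemma pi_n_ge:
  assumes "E \<subseteq> Pow {0..<n}" "edge_sizes ({0..<n}, E) \<subseteq> edge_sizes H" "\<not> subhyp H ({0..<n}, E)"
  shows "h_n n E \<le> pi_n H n"
  unfolding pi_n_def
proof (rule Max_ge)
  show "finite {h_n n E | E. E \<subseteq> Pow {0..<n} \<and> edge_sizes ({0..<n}, E) \<subseteq> edge_sizes H
                                \<and> \<not> subhyp H ({0..<n}, E)}"
    by (rule finite_subset[of _ "h_n n ` Pow (Pow {0..<n})"]) blast+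
qed (use assms in blast)

lemma pi_n_attained:
  assumes "\<not> subhyp H ({0..<n}, {})"
  shows "\<exists>E. E \<subseteq> Pow {0..<n} \<and> edge_sizes ({0..<n}, E) \<subseteq> edge_sizes H
            \<and> \<not> subhyp H ({0..<n}, E) \<and> pi_n H n = h_n n E"
proof -
  let ?S = "{h_n n E | E. E \<subseteq> Pow {0..<n} \<and> edge_sizes ({0..<n}, E) \<subseteq> edge_sizes H
                                \<and> \<not> subhyp H ({0..<n}, E)}"
  have fin: "finite ?S"
    by (rule finite_subset[of _ "h_n n ` Pow (Pow {0..<n})"]) blast+
  have "edge_sizes ({0..<n}, {}) \<subseteq> edge_sizes H" by (simp add: edge_sizes_def)
  hence ne: "?S \<noteq> {}" using assms by blast
  have "Max ?S \<in> ?S" using Max_in[OF fin ne] .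
  then show ?thesis unfolding pi_n_def by auto
qed

lemma h_n_split:
  assumes "finite E"
  shows "h_n n E = h_n n {F\<in>E. card F \<noteq> 2} + real (card {F\<in>E. card F = 2}) / real (n choose 2)"
proof -
  have "E = {F\<in>E. card F \<noteq> 2} \<union> {F\<in>E. card F = 2}" by auto
  hence "h_n n E = h_n n {F\<in>E. card F \<noteq> 2} + h_n n {F\<in>E. card F = 2}"
    unfolding h_n_def by (subst sum.union_disjoint[symmetric]) (use assms in auto)
  also have "h_n n {F\<in>E. card F = 2} = real (card {F\<in>E. card F = 2}) / real (n choose 2)"
    unfolding h_n_def by simp
  finally show ?thesis .
qed

lemma sizes_subdiv:
  assumes "\<exists>F\<in>snd H. card F = 2"
  shows "edge_sizes (subdiv2 H) = edge_sizes H"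
proof (intro equalityI subsetI)
  fix k assume "k \<in> edge_sizes (subdiv2 H)"
  then obtain F where F: "F \<in> snd (subdiv2 H)" "k = card F" unfolding edge_sizes_def by auto
  then consider (a) F0 where "F = Inl ` F0" "F0 \<in> snd H"
      | (b) u F0 where "F = {Inl u, Inr F0}" "F0 \<in> snd H" "card F0 = 2"
      unfolding subdiv2_def by auto
  then show "k \<in> edge_sizes H"
  proof cases
    case a
    have "card F = card F0" unfolding a(1) by (simp add: card_image)
    then show ?thesis using a F(2) unfolding edge_sizes_def by auto
  next
    case b
    have "card F = 2" unfolding b(1) by simp
    then show ?thesis using b F(2) unfolding edge_sizes_def by force
  qed
next
  fix k assume "k \<in> edge_sizes H"
  then obtain F where F: "F \<in> snd H" "k = card F" unfolding edge_sizes_def by auto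
  show "k \<in> edge_sizes (subdiv2 H)"
  proof (cases "card F = 2")
    case True
    then obtain u v where "F = {u,v}" by (meson card_2_iff)
    hence "{Inl u, Inr F} \<in> snd (subdiv2 H)" using F True unfolding subdiv2_def by auto
    moreover have "card {Inl u, Inr F} = (2::nat)" by simp
    ultimately show ?thesis using F(2) True unfolding edge_sizes_def by (metis image_eqI)
  next
    case False
    hence "Inl ` F \<in> snd (subdiv2 H)" using F unfolding subdiv2_def by auto
    moreover have "card (Inl ` F) = card F" by (simp add: card_image)
    ultimately show ?thesis using F(2) unfolding edge_sizes_def by (metis image_eqI)
  qed
qed

lemma upper:
  fixes H :: "'a hgraph"
  assumes hyp: "hypergraph H" and two: "\<exists>F\<in>snd H. card F = 2" and n2: "n \<ge> 2"
  shows "pi_n (subdiv2 H) n \<le> pi_n H n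
     + (6 + 2 * real (card (fst H) + card {F\<in>snd H. card F = 2})) / sqrt (real n)"
proof -
  define V where "V = {0..<n}"
  have finV: "finite V" unfolding V_def by simp
  have cardV: "card V = n" unfolding V_def by simp
  define c where "c = card (fst H) + card {F\<in>snd H. card F = 2}"
  obtain F0 where F0: "F0 \<in> snd H" "card F0 = 2" using two by blast
  then obtain a b where ab: "F0 = {a,b}" by (meson card_2_iff)
  have edge: "{Inl a, Inr F0} \<in> snd (subdiv2 H)" using F0 ab unfolding subdiv2_def by auto
  have "\<not> subhyp (subdiv2 H) ({0..<n}, {})" using edge unfolding subhyp_def by auto
  from pi_n_attained[OF this] obtain E where E: "E \<subseteq> Pow V"
      "edge_sizes (V, E) \<subseteq> edge_sizes (subdiv2 H)" "\<not> subhyp (subdiv2 H) (V, E)"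
      "pi_n (subdiv2 H) n = h_n n E" unfolding V_def by blast
  have finE: "finite E" using E(1) finV by (meson finite_Pow_iff finite_subset)
  define A where "A = {F\<in>E. card F \<noteq> 2}"
  define B where "B = {F\<in>E. card F = 2}"
  define N where "N = (\<lambda>u. {w\<in>V. {u,w} \<in> B})"
  define Bh where "Bh = {{u,v}|u v. u\<in>V \<and> v\<in>V \<and> u\<noteq>v \<and> c \<le> card (N u \<inter> N v)}"
  define E' where "E' = A \<union> Bh"
  have nsub: "\<not> subhyp H (V, E')"
  proof
    assume "subhyp H (V, E')"
    hence "subhyp H (V, {F\<in>E. card F \<noteq> 2} \<union> Bh)" unfolding E'_def A_def .
    moreover have "subhyp H (V, {F\<in>E. card F \<noteq> 2} \<union> Bh) \<Longrightarrow> subhyp (subdiv2 H) (V,E)"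
      unfolding Bh_def N_def B_def c_def by (rule lift_embedding[OF hyp finV E(1)])
    ultimately have "subhyp (subdiv2 H) (V, E)" by blast
    with E(3) show False by blast
  qed
  have BhV: "Bh \<subseteq> Pow V" unfolding Bh_def by auto
  have Bh2: "\<forall>F\<in>Bh. card F = 2" unfolding Bh_def by auto
  have E'V: "E' \<subseteq> Pow V" unfolding E'_def A_def using E(1) BhV by auto
  have finE': "finite E'" using E'V finV by (meson finite_Pow_iff finite_subset)
  have "edge_sizes (V, E') \<subseteq> edge_sizes H"
  proof
    fix k assume "k \<in> edge_sizes (V, E')"
    then obtain F where F: "F \<in> E'" "k = card F" unfolding edge_sizes_def by auto
    show "k \<in> edge_sizes H"
    proof (cases "F \<in> A")
      case True
      then have "k \<in> edge_sizes (V, E)" using F unfolding A_def edge_sizes_def by auto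
      then show ?thesis using E(2) sizes_subdiv[OF two] by auto
    next
      case False
      then have "k = 2" using F Bh2 unfolding E'_def by auto
      then show ?thesis using F0 unfolding edge_sizes_def by force
    qed
  qed
  from pi_n_ge[OF E'V[unfolded V_def] this[unfolded V_def] nsub[unfolded V_def]]
  have piH: "h_n n E' \<le> pi_n H n" .
  have sE': "h_n n E' = h_n n A + real (card Bh) / real (n choose 2)"
  proof -
    have "{F\<in>E'. card F \<noteq> 2} = A" unfolding E'_def A_def using Bh2 by auto
    moreover have "{F\<in>E'. card F = 2} = Bh" unfolding E'_def A_def using Bh2 by auto
    ultimately show ?thesis using h_n_split[OF finE', of n] by simp
  qed
  have sE: "h_n n E = h_n n A + real (card B) / real (n choose 2)"
    using h_n_split[OF finE, of n] unfolding A_def B_def .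
  have tpos: "sqrt (real n) > 0" using n2 by simp
  have BV: "B \<subseteq> Pow V" unfolding B_def using E(1) by auto
  have B2': "\<forall>F\<in>B. card F = 2" unfolding B_def by auto
  have cc: "real (card B) \<le> real (card Bh) + real (card V) * sqrt (real n) + real (card V) / 2
           + real (card V)^2 * real c / (2 * sqrt (real n))"
    unfolding Bh_def N_def by (rule codeg_count[OF finV BV B2' tpos])
  have Cpos: "real (n choose 2) > 0" using n2 by simp
  have "real (card B) / real (n choose 2) \<le> real (card Bh) / real (n choose 2)
      + (real n * sqrt (real n) + real n / 2 + real n ^ 2 * real c / (2 * sqrt (real n))) / real (n choose 2)"
    using cc Cpos unfolding cardV by (simp add: add_divide_distrib[symmetric] divide_right_mono)
  also have "(real n * sqrt (real n) + real n / 2 + real n ^ 2 * real c / (2 * sqrt (real n))) / real (n choose 2)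
      \<le> (6 + 2 * real c) / sqrt (real n)" by (rule errb[OF n2]) simp
  finally have "real (card B) / real (n choose 2) \<le> real (card Bh) / real (n choose 2) + (6 + 2 * real c) / sqrt (real n)"
    by simp
  then show ?thesis using E(4) sE sE' piH unfolding c_def by linarith
qed

lemma subdiv_edges_sub:
  assumes hyp: "hypergraph H" and F: "F \<in> snd (subdiv2 H)"
  shows "F \<subseteq> fst (subdiv2 H)"
proof -
  have EH: "\<forall>F\<in>snd H. F \<subseteq> fst H" using hyp unfolding hypergraph_def by auto
  from F consider (a) F0 where "F = Inl ` F0" "F0 \<in> snd H"
      | (b) u F0 where "F = {Inl u, Inr F0}" "F0 \<in> snd H" "card F0 = 2" "u \<in> F0"
      unfolding subdiv2_def by auto
  then show ?thesis
  proof cases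
    case a then show ?thesis using EH unfolding subdiv2_def by auto
  next
    case b then show ?thesis using EH unfolding subdiv2_def by auto
  qed
qed

lemma lower:
  fixes H :: "'a hgraph"
  assumes hyp: "hypergraph H" and two: "\<exists>F\<in>snd H. card F = 2" and nH: "card (fst H) \<le> n"
  shows "real (card (edge_sizes H)) - 1 \<le> pi_n (subdiv2 H) n"
proof -
  define R where "R = edge_sizes H"
  define V where "V = {0..<n}"
  have finH: "finite (fst H)" and EH: "\<forall>F\<in>snd H. F \<subseteq> fst H" using hyp unfolding hypergraph_def by auto
  have finsH: "finite (snd H)"
    by (rule finite_subset[of _ "Pow (fst H)"]) (use finH EH in auto)
  have finR: "finite R" unfolding R_def edge_sizes_def using finsH by simp
  have Rne: "R \<noteq> {}" using two unfolding R_def edge_sizes_def by auto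
  define k where "k = Max R"
  have kR: "k \<in> R" unfolding k_def using Max_in[OF finR Rne] .
  have Rn: "j \<le> n" if "j \<in> R" for j
  proof -
    from that obtain F where "F \<in> snd H" "j = card F" unfolding R_def edge_sizes_def by auto
    then have "j \<le> card (fst H)" using EH finH card_mono by metis
    then show ?thesis using nH by simp
  qed
  define E0 where "E0 = {F. F \<subseteq> V \<and> card F \<in> R - {k}}"
  have E0V: "E0 \<subseteq> Pow V" unfolding E0_def by auto
  have sz: "edge_sizes (V, E0) \<subseteq> edge_sizes (subdiv2 H)"
    unfolding sizes_subdiv[OF two] unfolding edge_sizes_def E0_def R_def by auto
  have ns: "\<not> subhyp (subdiv2 H) (V, E0)"
  proof
    assume "subhyp (subdiv2 H) (V, E0)"
    then obtain g where g: "inj_on g (fst (subdiv2 H))" "\<forall>F\<in>snd (subdiv2 H). g ` F \<in> E0"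
      unfolding subhyp_def by auto
    have "k \<in> edge_sizes (subdiv2 H)" using kR sizes_subdiv[OF two] unfolding R_def by simp
    then obtain F where F: "F \<in> snd (subdiv2 H)" "card F = k" unfolding edge_sizes_def by auto
    have "card (g ` F) = k" using F subdiv_edges_sub[OF hyp F(1)] inj_on_subset[OF g(1)] card_image by metis
    moreover have "g ` F \<in> E0" using g(2) F(1) by blast
    ultimately show False unfolding E0_def by auto
  qed
  define Aj where "Aj = (\<lambda>j. {F. F \<subseteq> V \<and> card F = j})"
  have E0U: "E0 = (\<Union>j\<in>R - {k}. Aj j)" unfolding E0_def Aj_def by auto
  have finAj: "finite (Aj j)" for j unfolding Aj_def V_def by simp
  have "h_n n E0 = (\<Sum>j\<in>R - {k}. \<Sum>F\<in>Aj j. 1 / real (n choose card F))"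
    unfolding h_n_def E0U
    by (rule sum.UNION_disjoint) (use finR finAj in \<open>auto simp: Aj_def\<close>)
  also have "\<dots> = (\<Sum>j\<in>R - {k}. (1::real))"
  proof (rule sum.cong[OF refl])
    fix j assume j: "j \<in> R - {k}"
    have "j \<le> n" using Rn j by blast
    hence nz: "real (n choose j) \<noteq> 0" by simp
    have cA: "card (Aj j) = n choose j" unfolding Aj_def V_def using n_subsets[of "{0..<n}" j] by simp
    have "(\<Sum>F\<in>Aj j. 1 / real (n choose card F)) = (\<Sum>F\<in>Aj j. 1 / real (n choose j))"
      by (rule sum.cong) (auto simp: Aj_def)
    also have "\<dots> = real (card (Aj j)) / real (n choose j)" by simp
    also have "\<dots> = 1" using nz cA by simp
    finally show "(\<Sum>F\<in>Aj j. 1 / real (n choose card F)) = 1" .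
  qed
  also have "\<dots> = real (card R) - 1"
  proof -
    have "card R \<ge> 1" using kR finR card_0_eq by fastforce
    then show ?thesis using kR finR by (simp add: card_Diff_singleton of_nat_diff)
  qed
  finally have "h_n n E0 = real (card R) - 1" .
  moreover have "h_n n E0 \<le> pi_n (subdiv2 H) n"
    using pi_n_ge[OF E0V[unfolded V_def] sz[unfolded V_def] ns[unfolded V_def]] .
  ultimately show ?thesis unfolding R_def by simp
qed

theorem mainTheorem13:
  fixes H :: "'a hgraph"
  assumes "hypergraph H"
    and "\<exists>F\<in>snd H. card F = 2"
    and "degenerate H"
  shows "degenerate (subdiv2 H)"
proof -
  define K where "K = 6 + 2 * real (card (fst H) + card {F\<in>snd H. card F = 2})"
  define L where "L = real (card (edge_sizes H)) - 1"
  have l1: "(\<lambda>n. pi_n H n) \<longlonglongrightarrow> L" using assms(3) unfolding degenerate_def L_def .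
  have "(\<lambda>n. pi_n H n + K / sqrt (real n)) \<longlonglongrightarrow> L + 0"
    by (rule tendsto_add[OF l1 lim0])
  hence l2: "(\<lambda>n. pi_n H n + K / sqrt (real n)) \<longlonglongrightarrow> L" by simp
  have ev1: "\<forall>\<^sub>F n in sequentially. L \<le> pi_n (subdiv2 H) n"
    unfolding L_def by (rule eventually_sequentiallyI[of "card (fst H)"]) (rule lower[OF assms(1,2)])
  have ev2: "\<forall>\<^sub>F n in sequentially. pi_n (subdiv2 H) n \<le> pi_n H n + K / sqrt (real n)"
    unfolding K_def by (rule eventually_sequentiallyI[of 2]) (rule upper[OF assms(1,2)])
  have "(\<lambda>n. pi_n (subdiv2 H) n) \<longlonglongrightarrow> L"
    by (rule tendsto_sandwich[OF ev1 ev2 tendsto_const l2])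
  then show ?thesis unfolding degenerate_def sizes_subdiv[OF assms(2)] L_def .
qed


end
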